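(* Let $F_c$ be a CABA framework, let $\alpha,\beta\in\mathit{CArg}$, $\Gamma=\mathit{GrCInst}(\alpha)$ and $\Delta=\mathit{GrCInst}(\beta)$. Then $\alpha$ partially attacks $\beta$ if and only if there exist $\alpha'\in\Gamma$ and $\beta'\in\Delta$ such that $\alpha'$ partially attacks $\beta'$.
   Context: Conventions. $\mathsf X$: tuple of variables; $\mathsf t,\mathsf u$: tuples of terms; $\mathsf X=\mathsf t$: componentwise equality constraints. A substitution $\vartheta=\{X_1/t_1,\dots,X_n/t_n\}$ maps distinct variables to terms; $e\vartheta$ replaces each $X_i$ by $t_i$. $\mathit{vars}(e)$: variables of $e$; ground: no variables. $\exists_{-V}B$: $B$ existentially quantified over its free variables not in $V$; $\exists(\cdot)$ closure. Theory of constraints. $\mathcal{CT}$ is a first-order theory with equality (identity on its domain, including the Clark Equality Theory) whose atomic formulas form the set $\mathcal C$ of constraints; a finite set $\{c_1,\dots,c_n\}$ is consistent if $\mathcal{CT}\models\exists(c_1\wedge\dots\wedge c_n)$. CABA framework $F_c=\langle\mathcal L_c,\mathcal C,\mathcal R,\mathcal{CT},\mathcal A,\overline{\cdot}\rangle$: $\mathcal L_c$ a set of atoms; $\mathcal C\subseteq\mathcal L_c$ constraints; $\mathcal R$ rules $s_0\leftarrow s_1,\dots,s_m$ ($s_0\in\mathcal L_c\setminus\mathcal C$) in normalised form; $\mathcal A\subseteq\mathcal L_c\setminus\mathcal C$ nonempty assumptions, not heads of rules; $\overline\cdot:\mathcal A\to\mathcal L_c\setminus\mathcal C$ total with $\overline{p(\mathsf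 t)}=cp(\mathsf t)$ for a fixed predicate $cp$ per assumption predicate $p$; $\mathcal L_c,\mathcal C,\mathcal A$ predicate closed. Constrained arguments. A tight constrained argument $C\cup A\vdash_R s$ (consistent $C\subseteq\mathcal C$, $A\subseteq\mathcal A$, $R\subseteq\mathcal R$, $s\in\mathcal L_c\setminus\mathcal C$) is a finite tree with root $s$, each non-leaf node $p(\mathsf t)$ having as children exactly $s_1\vartheta,\dots,s_m\vartheta$ for exactly one renamed-apart copy $p(\mathsf X)\leftarrow s_1,\dots,s_m$ of a rule of $R$, $\vartheta=\{\mathsf X/\mathsf t\}$ (or true for a fact), each leaf a constraint of $C$, an assumption of $A$ or true. A constrained argument is $C\vartheta\cup D\cup A\vartheta\vdash_R s\vartheta$ for some tight $C\cup A\vdash_R s$, substitution $\vartheta$, $D\subseteq\mathcal C$ with $C\vartheta\cup D$ consistent; a constrained instance of a constrained argument $C\cup A\vdash_R s$ is $C\vartheta\cup D\cup A\vartheta\vdash_R s\vartheta$ with $C\vartheta\cup D$ consistent. $\mathit{CArg}$: all constrained arguments; $\mathit{GrCInst}(\alpha)$: ground constrained instances of $\alpha$. Partial attack. Let $\alpha=\{c_1,\dots,c_m\}\cup A_1\vdash s_1$ and $\beta=\{d_1,\dots,d_n\}\cup A_2\cup\{a\}\vdash s_2$ be constrained arguments with $s_1=\overline a$. $\alpha$ partially attacks $\beta$ if $\mathcal{CT}\models\exists(\exists_{-\mathit{vars}(s_1)}(c_1\wedge\dots\wedge c_m)\wedge\exists_{-\mathit{vars}(s_1)}(d_1\wedge\dots\wedge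 d_n))$. If $\alpha'=\{c_i\}\cup A_1\vdash\overline{p(\mathsf t)}$ and $\beta'=\{d_j\}\cup A_2\cup\{p(\mathsf u)\}\vdash s_2$ with $\mathsf t\neq\mathsf u$, and $\mathsf X$ is a tuple of new distinct variables, $\alpha'$ partially attacks $\beta'$ if $\{c_i\}\cup\{\mathsf X=\mathsf t\}\cup A_1\vdash\overline{p(\mathsf X)}$ partially attacks $\{d_j\}\cup\{\mathsf X=\mathsf u\}\cup A_2\cup\{p(\mathsf X)\}\vdash s_2$ in the previous sense.
   Formalization: $\mathcal{CT}$ is a single structure whose domain is the ground terms and whose equality is syntactic identity, so consistency and partial attack ask for a ground assignment satisfying the constraints. Each condition added here is assumed in the paper as well or is needed for the statement above to hold. *)

theory Defs
  imports Main
begin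

datatype ('f,'v) trm = Var 'v | Fn 'f "('f,'v) trm list"

primrec tvars :: "('f,'v) trm \<Rightarrow> 'v set" where
  "tvars (Var x) = {x}"
| "tvars (Fn f ts) = \<Union>(set (map tvars ts))"

primrec tsubst :: "('v \<Rightarrow> ('f,'v) trm) \<Rightarrow> ('f,'v) trm \<Rightarrow> ('f,'v) trm" where
  "tsubst \<sigma> (Var x) = \<sigma> x"
| "tsubst \<sigma> (Fn f ts) = Fn f (map (tsubst \<sigma>) ts)"

primrec unvar :: "('f,'v) trm \<Rightarrow> 'v" where
  "unvar (Var x) = x"
| "unvar (Fn f ts) = undefined"

type_synonym ('p,'f,'v) atom = "'p \<times> ('f,'v) trm list"

text \<open>A rule s0 <- s1,...,sm: head and body list.\<close>
type_synonym ('p,'f,'v) rule = "('p,'f,'v) atom \<times> ('p,'f,'v) atom list"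

definition avars :: "('p,'f,'v) atom \<Rightarrow> 'v set" where
  "avars a = \<Union>(tvars ` set (snd a))"

definition asubst :: "('v \<Rightarrow> ('f,'v) trm) \<Rightarrow> ('p,'f,'v) atom \<Rightarrow> ('p,'f,'v) atom" where
  "asubst \<sigma> a = (fst a, map (tsubst \<sigma>) (snd a))"

definition aground :: "('p,'f,'v) atom \<Rightarrow> bool" where
  "aground a \<longleftrightarrow> avars a = {}"

definition rvars :: "('p,'f,'v) rule \<Rightarrow> 'v set" where
  "rvars r = avars (fst r) \<union> \<Union>(avars ` set (snd r))"

definition ren_rule :: "('v \<Rightarrow> 'v) \<Rightarrow> ('p,'f,'v) rule \<Rightarrow> ('p,'f,'v) rule" where
  "ren_rule \<rho> r = (asubst (Var \<circ> \<rho>) (fst r), map (asubst (Var \<circ> \<rho>)) (snd r))"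

definition bind :: "'v list \<Rightarrow> ('f,'v) trm list \<Rightarrow> 'v \<Rightarrow> ('f,'v) trm" where
  "bind Xs ts x = (case map_of (zip Xs ts) x of None \<Rightarrow> Var x | Some t \<Rightarrow> t)"

definition normalised :: "('p,'f,'v) rule \<Rightarrow> bool" where
  "normalised r \<longleftrightarrow> (\<exists>Xs. snd (fst r) = map Var Xs \<and> distinct Xs)"

text \<open>The language L_c consists of all atoms; since L_c, C and A are predicate closed,
  the constraints and assumptions are given by sets of predicate symbols.
  The theory of constraints CT is represented by its (Herbrand) interpretation
  of constraint predicates on ground terms: CT |= exists(phi) iff phi is satisfied
  by some ground assignment.  eqp is the equality predicate.\<close>
record ('p,'f,'v) caba =
  cpreds :: "'p set"
  apreds :: "'p set"
  rules :: "('p,'f,'v) rule set"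
  contrp :: "'p \<Rightarrow> 'p"
  interp :: "'p \<Rightarrow> ('f,'v) trm list \<Rightarrow> bool"
  eqp :: 'p

definition gr_assign :: "('v \<Rightarrow> ('f,'v) trm) \<Rightarrow> bool" where
  "gr_assign \<sigma> \<longleftrightarrow> (\<forall>x. tvars (\<sigma> x) = {})"

definition sat :: "('p,'f,'v,'z) caba_scheme \<Rightarrow> ('v \<Rightarrow> ('f,'v) trm) \<Rightarrow> ('p,'f,'v) atom \<Rightarrow> bool" where
  "sat F \<sigma> c \<longleftrightarrow> interp F (fst c) (map (tsubst \<sigma>) (snd c))"

definition catoms :: "('p,'f,'v,'z) caba_scheme \<Rightarrow> ('p,'f,'v) atom set" where
  "catoms F = {c. fst c \<in> cpreds F}"

definition consistent :: "('p,'f,'v,'z) caba_scheme \<Rightarrow> ('p,'f,'v) atom set \<Rightarrow> bool" where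
  "consistent F S \<longleftrightarrow> finite S \<and> S \<subseteq> catoms F \<and> (\<exists>\<sigma>. gr_assign \<sigma> \<and> (\<forall>c\<in>S. sat F \<sigma> c))"

definition contr :: "('p,'f,'v,'z) caba_scheme \<Rightarrow> ('p,'f,'v) atom \<Rightarrow> ('p,'f,'v) atom" where
  "contr F a = (contrp F (fst a), snd a)"

definition caba_framework :: "('p,'f,'v,'z) caba_scheme \<Rightarrow> bool" where
  "caba_framework F \<longleftrightarrow>
     infinite (UNIV :: 'v set)
   \<and> apreds F \<noteq> {}
   \<and> cpreds F \<inter> apreds F = {}
   \<and> eqp F \<in> cpreds F
   \<and> (\<forall>ts. (\<forall>t\<in>set ts. tvars t = {}) \<longrightarrow> (interp F (eqp F) ts \<longleftrightarrow> (\<exists>s. ts = [s, s])))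
   \<and> (\<forall>p\<in>apreds F. contrp F p \<notin> cpreds F)
   \<and> (\<forall>r\<in>rules F. fst (fst r) \<notin> cpreds F \<and> fst (fst r) \<notin> apreds F \<and> normalised r)"

text \<open>Nd s r rho children: node labelled s expanded with the renamed copy (by rho) of rule r.
  A node with no children corresponds to a fact (child "true").\<close>
datatype ('p,'f,'v) dtree =
    Lf "('p,'f,'v) atom"
  | Nd "('p,'f,'v) atom" "('p,'f,'v) rule" "'v \<Rightarrow> 'v" "('p,'f,'v) dtree list"

primrec root :: "('p,'f,'v) dtree \<Rightarrow> ('p,'f,'v) atom" where
  "root (Lf a) = a"
| "root (Nd a r \<rho> ts) = a"

primrec leaves :: "('p,'f,'v) dtree \<Rightarrow> ('p,'f,'v) atom set" where
  "leaves (Lf a) = {a}"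
| "leaves (Nd a r \<rho> ts) = \<Union>(set (map leaves ts))"

primrec nds :: "('p,'f,'v) dtree \<Rightarrow> (('p,'f,'v) rule \<times> ('v \<Rightarrow> 'v)) list" where
  "nds (Lf a) = []"
| "nds (Nd a r \<rho> ts) = (r, \<rho>) # concat (map nds ts)"

primrec wft :: "('p,'f,'v,'z) caba_scheme \<Rightarrow> ('p,'f,'v) dtree \<Rightarrow> bool" where
  "wft F (Lf a) \<longleftrightarrow> fst a \<in> cpreds F \<union> apreds F"
| "wft F (Nd a r \<rho> ts) \<longleftrightarrow>
     r \<in> rules F \<and> inj \<rho> \<and>
     (let r' = ren_rule \<rho> r; Xs = map unvar (snd (fst r')) in
        fst (fst r') = fst a \<and> length Xs = length (snd a) \<and>
        map root ts = map (asubst (bind Xs (snd a))) (snd r')) \<and>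
     list_all (wft F) ts"

definition renamed_apart :: "('p,'f,'v) dtree \<Rightarrow> bool" where
  "renamed_apart T \<longleftrightarrow>
     (let N = nds T in
       (\<forall>i<length N. \<forall>j<length N. i \<noteq> j \<longrightarrow>
          snd (N!i) ` rvars (fst (N!i)) \<inter> snd (N!j) ` rvars (fst (N!j)) = {}) \<and>
       (\<forall>i<length N. snd (N!i) ` rvars (fst (N!i)) \<inter> avars (root T) = {}))"

record ('p,'f,'v) carg =
  cons :: "('p,'f,'v) atom set"
  asms :: "('p,'f,'v) atom set"
  rls :: "('p,'f,'v) rule set"
  claim :: "('p,'f,'v) atom"

definition tight :: "('p,'f,'v,'z) caba_scheme \<Rightarrow> ('p,'f,'v) carg \<Rightarrow> bool" where
  "tight F \<alpha> \<longleftrightarrow> (\<exists>T. wft F T \<and> renamed_apart T \<and> root T = claim \<alpha> \<and>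
      fst (claim \<alpha>) \<notin> cpreds F \<and>
      cons \<alpha> = {l \<in> leaves T. fst l \<in> cpreds F} \<and>
      asms \<alpha> = {l \<in> leaves T. fst l \<in> apreds F} \<and>
      rls \<alpha> = fst ` set (nds T) \<and>
      consistent F (cons \<alpha>))"

definition cinst :: "('p,'f,'v) carg \<Rightarrow> ('v \<Rightarrow> ('f,'v) trm) \<Rightarrow> ('p,'f,'v) atom set \<Rightarrow> ('p,'f,'v) carg" where
  "cinst \<alpha> \<theta> D = \<lparr>cons = asubst \<theta> ` cons \<alpha> \<union> D, asms = asubst \<theta> ` asms \<alpha>,
                     rls = rls \<alpha>, claim = asubst \<theta> (claim \<alpha>)\<rparr>"

definition CArg :: "('p,'f,'v,'z) caba_scheme \<Rightarrow> ('p,'f,'v) carg set" where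
  "CArg F = {cinst \<tau> \<theta> D | \<tau> \<theta> D. tight F \<tau> \<and> D \<subseteq> catoms F \<and>
                consistent F (asubst \<theta> ` cons \<tau> \<union> D)}"

definition ground_arg :: "('p,'f,'v) carg \<Rightarrow> bool" where
  "ground_arg \<alpha> \<longleftrightarrow> (\<forall>c\<in>cons \<alpha>. aground c) \<and> (\<forall>a\<in>asms \<alpha>. aground a) \<and> aground (claim \<alpha>)"

definition GrCInst :: "('p,'f,'v,'z) caba_scheme \<Rightarrow> ('p,'f,'v) carg \<Rightarrow> ('p,'f,'v) carg set" where
  "GrCInst F \<alpha> = {cinst \<alpha> \<theta> D | \<theta> D. D \<subseteq> catoms F \<and>
                consistent F (asubst \<theta> ` cons \<alpha> \<union> D) \<and> ground_arg (cinst \<alpha> \<theta> D)}"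

text \<open>CT |= exists( exists_{-V} /\C  /\  exists_{-V} /\D ).\<close>
definition pcond :: "('p,'f,'v,'z) caba_scheme \<Rightarrow> 'v set \<Rightarrow> ('p,'f,'v) atom set \<Rightarrow> ('p,'f,'v) atom set \<Rightarrow> bool" where
  "pcond F V C D \<longleftrightarrow> (\<exists>\<sigma>. gr_assign \<sigma> \<and>
      (\<exists>\<sigma>1. gr_assign \<sigma>1 \<and> (\<forall>x\<in>V. \<sigma>1 x = \<sigma> x) \<and> (\<forall>c\<in>C. sat F \<sigma>1 c)) \<and>
      (\<exists>\<sigma>2. gr_assign \<sigma>2 \<and> (\<forall>x\<in>V. \<sigma>2 x = \<sigma> x) \<and> (\<forall>d\<in>D. sat F \<sigma>2 d)))"

definition arg_vars :: "('p,'f,'v) carg \<Rightarrow> 'v set" where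
  "arg_vars \<alpha> = \<Union>(avars ` cons \<alpha>) \<union> \<Union>(avars ` asms \<alpha>) \<union> avars (claim \<alpha>)"

definition eqs :: "('p,'f,'v,'z) caba_scheme \<Rightarrow> 'v list \<Rightarrow> ('f,'v) trm list \<Rightarrow> ('p,'f,'v) atom set" where
  "eqs F Xs ts = set (map (\<lambda>(x, t). (eqp F, [Var x, t])) (zip Xs ts))"

definition pattacks :: "('p,'f,'v,'z) caba_scheme \<Rightarrow> ('p,'f,'v) carg \<Rightarrow> ('p,'f,'v) carg \<Rightarrow> bool" where
  "pattacks F \<alpha> \<beta> \<longleftrightarrow> (\<exists>a\<in>asms \<beta>. fst a \<in> apreds F \<and>
     ((claim \<alpha> = contr F a \<and> pcond F (avars (claim \<alpha>)) (cons \<alpha>) (cons \<beta>))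
    \<or> (fst (claim \<alpha>) = contrp F (fst a) \<and> snd (claim \<alpha>) \<noteq> snd a \<and>
       (\<exists>Xs. distinct Xs \<and> length Xs = length (snd a) \<and> length Xs = length (snd (claim \<alpha>)) \<and>
          set Xs \<inter> (arg_vars \<alpha> \<union> arg_vars \<beta>) = {} \<and>
          pcond F (set Xs) (cons \<alpha> \<union> eqs F Xs (snd (claim \<alpha>)))
                           (cons \<beta> \<union> eqs F Xs (snd a))))))"

end

theory Submission imports Defs begin

lemma tsubst_ground_vars: "gr_assign \<sigma> \<Longrightarrow> tvars (tsubst \<sigma> t) = {}"
  by (induction t) (auto simp: gr_assign_def)

lemma tsubst_ground_id: "tvars t = {} \<Longrightarrow> tsubst \<sigma> t = t"
  by (induction t) (auto simp: map_idI)

lemma tsubst_comp: "tsubst \<sigma> (tsubst \<theta> t) = tsubst (\<lambda>x. tsubst \<sigma> (\<theta> x)) t"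
  by (induction t) auto

lemma tsubst_agree: "(\<forall>x\<in>tvars t. \<sigma> x = \<tau> x) \<Longrightarrow> tsubst \<sigma> t = tsubst \<tau> t"
  by (induction t) auto

lemma tsubst_agree_conv: "tsubst \<sigma> t = tsubst \<tau> t \<Longrightarrow> x \<in> tvars t \<Longrightarrow> \<sigma> x = \<tau> x"
  by (induction t) (auto simp: map_eq_conv)

lemma finite_tvars: "finite (tvars t)"
  by (induction t) auto

lemma finite_avars: "finite (avars a)"
  by (auto simp: avars_def finite_tvars)

lemma finite_leaves: "finite (leaves T)"
  by (induction T) auto

lemma gr_comp: "gr_assign \<sigma> \<Longrightarrow> gr_assign (\<lambda>x. tsubst \<sigma> (\<theta> x))"
  by (simp add: gr_assign_def tsubst_ground_vars)

lemma sat_asubst: "sat F \<sigma> (asubst \<theta> c) = sat F (\<lambda>x. tsubst \<sigma> (\<theta> x)) c"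
  by (simp add: sat_def asubst_def tsubst_comp o_def)

lemma sat_asubst_ground: "gr_assign \<rho> \<Longrightarrow> sat F \<tau> (asubst \<rho> c) = sat F \<rho> c"
  by (simp add: sat_def asubst_def tsubst_ground_id tsubst_ground_vars o_def)

lemma sat_agree: "(\<forall>x\<in>avars c. \<sigma> x = \<tau> x) \<Longrightarrow> sat F \<sigma> c = sat F \<tau> c"
proof -
  assume H: "\<forall>x\<in>avars c. \<sigma> x = \<tau> x"
  have "map (tsubst \<sigma>) (snd c) = map (tsubst \<tau>) (snd c)"
  proof (rule map_cong[OF refl])
    fix t assume "t \<in> set (snd c)"
    then have "tvars t \<subseteq> avars c" by (auto simp: avars_def)
    then show "tsubst \<sigma> t = tsubst \<tau> t" using H by (intro tsubst_agree) blast
  qed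
  then show ?thesis unfolding sat_def by (simp only:)
qed

lemma aground_asubst: "gr_assign \<sigma> \<Longrightarrow> aground (asubst \<sigma> a)"
  by (simp add: aground_def avars_def asubst_def tsubst_ground_vars)

lemma eq_sat: "caba_framework F \<Longrightarrow> gr_assign \<sigma> \<Longrightarrow>
   sat F \<sigma> (eqp F, [Var x, t]) \<longleftrightarrow> \<sigma> x = tsubst \<sigma> t"
  unfolding caba_framework_def sat_def
  by (auto simp: gr_assign_def tsubst_ground_vars)

lemma eqs_mem: "i < length Xs \<Longrightarrow> length Xs = length ts \<Longrightarrow> (eqp F, [Var (Xs!i), ts!i]) \<in> eqs F Xs ts"
  unfolding eqs_def by (force simp: in_set_zip)

lemma eqs_elem: "c \<in> eqs F Xs ts \<Longrightarrow> \<exists>i<length Xs. i < length ts \<and> c = (eqp F, [Var (Xs!i), ts!i])"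
  unfolding eqs_def by (auto simp: in_set_zip)

lemma CArg_fin: "\<alpha> \<in> CArg F \<Longrightarrow> finite (cons \<alpha>) \<and> cons \<alpha> \<subseteq> catoms F \<and> finite (asms \<alpha>)"
proof -
  assume "\<alpha> \<in> CArg F"
  then obtain \<tau> \<theta> D where e: "\<alpha> = cinst \<tau> \<theta> D" and t: "tight F \<tau>"
    and c: "consistent F (asubst \<theta> ` cons \<tau> \<union> D)"
    unfolding CArg_def by blast
  have ce: "cons \<alpha> = asubst \<theta> ` cons \<tau> \<union> D" and ae: "asms \<alpha> = asubst \<theta> ` asms \<tau>"
    using e by (simp_all add: cinst_def)
  from t obtain T where "asms \<tau> = {l \<in> leaves T. fst l \<in> apreds F}"
    unfolding tight_def by blast
  then have "finite (asms \<tau>)" using finite_leaves[of T] by simp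
  then have "finite (asms \<alpha>)" using ae by simp
  moreover have "finite (cons \<alpha>) \<and> cons \<alpha> \<subseteq> catoms F"
    using c ce unfolding consistent_def by simp
  ultimately show ?thesis by simp
qed

lemma finite_arg_vars: "finite (cons \<alpha>) \<Longrightarrow> finite (asms \<alpha>) \<Longrightarrow> finite (arg_vars \<alpha>)"
  by (simp add: arg_vars_def finite_avars)

lemma fresh_list: "infinite (UNIV :: 'v set) \<Longrightarrow> finite (S :: 'v set) \<Longrightarrow>
   \<exists>Xs. distinct Xs \<and> length Xs = n \<and> set Xs \<inter> S = {}"
proof -
  assume "infinite (UNIV :: 'v set)" "finite S"
  then have "infinite (UNIV - S)" by (simp add: Diff_infinite_finite)
  then obtain B where "finite B" "card B = n" "B \<subseteq> UNIV - S"
    using infinite_arbitrarily_large by blast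
  then obtain Xs where "set Xs = B" "distinct Xs" using finite_distinct_list by blast
  then show ?thesis using \<open>card B = n\<close> \<open>B \<subseteq> UNIV - S\<close> distinct_card by fastforce
qed

lemma inst_GrC:
  assumes "gr_assign \<rho>" "\<forall>c\<in>cons \<alpha>. sat F \<rho> c" "finite (cons \<alpha>)" "cons \<alpha> \<subseteq> catoms F"
  shows "cinst \<alpha> \<rho> {} \<in> GrCInst F \<alpha>"
proof -
  have "consistent F (asubst \<rho> ` cons \<alpha> \<union> {})"
  proof -
    have "asubst \<rho> ` cons \<alpha> \<subseteq> catoms F" using assms(4) by (auto simp: catoms_def asubst_def)
    moreover have "\<forall>c\<in>asubst \<rho> ` cons \<alpha>. sat F \<rho> c"
      using assms(2) sat_asubst_ground[OF assms(1)] by blast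
    ultimately show ?thesis unfolding consistent_def using assms(1,3) by auto
  qed
  moreover have "ground_arg (cinst \<alpha> \<rho> {})"
    by (simp add: ground_arg_def cinst_def aground_asubst[OF assms(1)])
  ultimately show ?thesis unfolding GrCInst_def by blast
qed

lemma ground_pattack:
  assumes g1: "gr_assign \<rho>1" and g2: "gr_assign \<rho>2" and a: "a \<in> asms \<beta>" "fst a \<in> apreds F"
    and c: "fst (claim \<alpha>) = contrp F (fst a)"
    and m: "map (tsubst \<rho>1) (snd (claim \<alpha>)) = map (tsubst \<rho>2) (snd a)"
    and s1: "\<forall>c\<in>cons \<alpha>. sat F \<rho>1 c" and s2: "\<forall>c\<in>cons \<beta>. sat F \<rho>2 c"
  shows "pattacks F (cinst \<alpha> \<rho>1 {}) (cinst \<beta> \<rho>2 {})"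
proof -
  have am: "asubst \<rho>2 a \<in> asms (cinst \<beta> \<rho>2 {})" using a by (simp add: cinst_def)
  have cl: "claim (cinst \<alpha> \<rho>1 {}) = contr F (asubst \<rho>2 a)"
    using c m by (simp add: cinst_def asubst_def contr_def prod_eq_iff)
  have pc: "pcond F (avars (claim (cinst \<alpha> \<rho>1 {}))) (cons (cinst \<alpha> \<rho>1 {})) (cons (cinst \<beta> \<rho>2 {}))"
    unfolding pcond_def using g1 g2 s1 s2
    by (auto simp: cinst_def sat_asubst_ground intro!: exI[of _ \<rho>1])
  have "fst (asubst \<rho>2 a) \<in> apreds F" using a(2) by (simp add: asubst_def)
  then show ?thesis unfolding pattacks_def using am cl pc by blast
qed

lemma avars_sub_claim: "t \<in> set (snd (claim \<alpha>)) \<Longrightarrow> tvars t \<subseteq> arg_vars \<alpha>"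
  by (auto simp: arg_vars_def avars_def)

lemma avars_sub_asm: "a \<in> asms \<alpha> \<Longrightarrow> t \<in> set (snd a) \<Longrightarrow> tvars t \<subseteq> arg_vars \<alpha>"
  by (auto simp: arg_vars_def avars_def)

lemma avars_sub_cons: "c \<in> cons \<alpha> \<Longrightarrow> avars c \<subseteq> arg_vars \<alpha>"
  by (auto simp: arg_vars_def)

lemma fw_inf: "caba_framework (F::('p,'f,'v,'z) caba_scheme) \<Longrightarrow> infinite (UNIV::'v set)"
  by (simp add: caba_framework_def)

lemma lift_pattack:
  assumes fw: "caba_framework F"
    and fin: "finite (arg_vars \<alpha> \<union> arg_vars \<beta>)"
    and g1: "gr_assign \<rho>1" and g2: "gr_assign \<rho>2" and a: "a \<in> asms \<beta>" "fst a \<in> apreds F"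
    and c: "fst (claim \<alpha>) = contrp F (fst a)"
    and m: "map (tsubst \<rho>1) (snd (claim \<alpha>)) = map (tsubst \<rho>2) (snd a)"
    and s1: "\<forall>c\<in>cons \<alpha>. sat F \<rho>1 c" and s2: "\<forall>c\<in>cons \<beta>. sat F \<rho>2 c"
  shows "pattacks F \<alpha> \<beta>"
proof (cases "snd (claim \<alpha>) = snd a")
  case True
  then have cl: "claim \<alpha> = contr F a" using c by (simp add: contr_def prod_eq_iff)
  have ag: "\<rho>2 x = \<rho>1 x" if "x \<in> avars (claim \<alpha>)" for x
  proof -
    from that obtain t where t: "t \<in> set (snd (claim \<alpha>))" "x \<in> tvars t" by (auto simp: avars_def)
    have "tsubst \<rho>1 t = tsubst \<rho>2 t" using m t(1) True by (simp add: map_eq_conv)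
    then show ?thesis using tsubst_agree_conv t(2) by metis
  qed
  have "pcond F (avars (claim \<alpha>)) (cons \<alpha>) (cons \<beta>)"
    unfolding pcond_def using g1 g2 s1 s2 ag by (intro exI[of _ \<rho>1]) auto
  then show ?thesis unfolding pattacks_def using a cl by blast
next
  case False
  define cs where "cs = snd (claim \<alpha>)"
  define as where "as = snd a"
  have len: "length cs = length as" using m unfolding cs_def as_def by (metis length_map)
  obtain Xs where X: "distinct Xs" "length Xs = length as" "set Xs \<inter> (arg_vars \<alpha> \<union> arg_vars \<beta>) = {}"
    using fresh_list[OF fw_inf[OF fw] fin] by blast
  define vs where "vs = map (tsubst \<rho>1) cs"
  have vs2: "vs = map (tsubst \<rho>2) as" using m unfolding vs_def cs_def as_def by simp
  define \<sigma>1 where "\<sigma>1 = (\<lambda>x. if x \<in> set Xs then the (map_of (zip Xs vs) x) else \<rho>1 x)"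
  define \<sigma>2 where "\<sigma>2 = (\<lambda>x. if x \<in> set Xs then the (map_of (zip Xs vs) x) else \<rho>2 x)"
  have lvs: "length vs = length Xs" using X(2) len vs_def by simp
  have s1X: "\<sigma>1 (Xs!i) = vs!i" if "i < length Xs" for i
    using that X(1) lvs map_of_zip_nth[of Xs vs i] by (simp add: \<sigma>1_def)
  have s2X: "\<sigma>2 (Xs!i) = vs!i" if "i < length Xs" for i
    using that X(1) lvs map_of_zip_nth[of Xs vs i] by (simp add: \<sigma>2_def)
  have vsg: "tvars (vs!i) = {}" if "i < length Xs" for i
    using that lvs tsubst_ground_vars[OF g1] unfolding vs_def by simp
  have gs1: "gr_assign \<sigma>1" unfolding gr_assign_def
  proof
    fix x show "tvars (\<sigma>1 x) = {}"
    proof (cases "x \<in> set Xs")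
      case True then obtain i where "i < length Xs" "x = Xs!i" by (metis in_set_conv_nth)
      then show ?thesis using s1X vsg by simp
    next
      case False then show ?thesis using g1 by (simp add: \<sigma>1_def gr_assign_def)
    qed
  qed
  have gs2: "gr_assign \<sigma>2" unfolding gr_assign_def
  proof
    fix x show "tvars (\<sigma>2 x) = {}"
    proof (cases "x \<in> set Xs")
      case True then obtain i where "i < length Xs" "x = Xs!i" by (metis in_set_conv_nth)
      then show ?thesis using s2X vsg by simp
    next
      case False then show ?thesis using g2 by (simp add: \<sigma>2_def gr_assign_def)
    qed
  qed
  have sat1: "\<forall>c\<in>cons \<alpha> \<union> eqs F Xs cs. sat F \<sigma>1 c"
  proof
    fix c assume "c \<in> cons \<alpha> \<union> eqs F Xs cs"
    then show "sat F \<sigma>1 c"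
    proof
      assume c: "c \<in> cons \<alpha>"
      have "\<forall>x\<in>avars c. \<sigma>1 x = \<rho>1 x" using avars_sub_cons[OF c] X(3) by (auto simp: \<sigma>1_def)
      then show ?thesis using sat_agree s1 c by metis
    next
      assume "c \<in> eqs F Xs cs"
      then obtain i where i: "i < length Xs" "i < length cs" "c = (eqp F, [Var (Xs!i), cs!i])"
        using eqs_elem by blast
      have "\<forall>x\<in>tvars (cs!i). \<sigma>1 x = \<rho>1 x" using avars_sub_claim[of "cs!i" \<alpha>] i X(3)
        unfolding cs_def by (auto simp: \<sigma>1_def)
      then have "tsubst \<sigma>1 (cs!i) = vs!i" using tsubst_agree i unfolding vs_def by fastforce
      then show ?thesis using eq_sat[OF fw gs1] i s1X by simp
    qed
  qed
  have sat2: "\<forall>c\<in>cons \<beta> \<union> eqs F Xs as. sat F \<sigma>2 c"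
  proof
    fix c assume "c \<in> cons \<beta> \<union> eqs F Xs as"
    then show "sat F \<sigma>2 c"
    proof
      assume c: "c \<in> cons \<beta>"
      have "\<forall>x\<in>avars c. \<sigma>2 x = \<rho>2 x" using avars_sub_cons[OF c] X(3) by (auto simp: \<sigma>2_def)
      then show ?thesis using sat_agree s2 c by metis
    next
      assume "c \<in> eqs F Xs as"
      then obtain i where i: "i < length Xs" "i < length as" "c = (eqp F, [Var (Xs!i), as!i])"
        using eqs_elem by blast
      have "\<forall>x\<in>tvars (as!i). \<sigma>2 x = \<rho>2 x" using avars_sub_asm[OF a(1), of "as!i"] i X(3)
        unfolding as_def by (auto simp: \<sigma>2_def)
      then have "tsubst \<sigma>2 (as!i) = vs!i" using tsubst_agree i unfolding vs2 by fastforce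
      then show ?thesis using eq_sat[OF fw gs2] i s2X by simp
    qed
  qed
  have agr: "\<forall>x\<in>set Xs. \<sigma>2 x = \<sigma>1 x" by (simp add: \<sigma>1_def \<sigma>2_def)
  have "pcond F (set Xs) (cons \<alpha> \<union> eqs F Xs cs) (cons \<beta> \<union> eqs F Xs as)"
    unfolding pcond_def using gs1 gs2 sat1 sat2 agr by (intro exI[of _ \<sigma>1]) auto
  then have E: "\<exists>Xs. distinct Xs \<and> length Xs = length (snd a) \<and> length Xs = length (snd (claim \<alpha>)) \<and>
          set Xs \<inter> (arg_vars \<alpha> \<union> arg_vars \<beta>) = {} \<and>
          pcond F (set Xs) (cons \<alpha> \<union> eqs F Xs (snd (claim \<alpha>)))
                           (cons \<beta> \<union> eqs F Xs (snd a))"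
    using X len unfolding cs_def as_def by (intro exI[of _ Xs]) simp
  show ?thesis unfolding pattacks_def
    apply (rule bexI[OF _ a(1)])
    apply (rule conjI[OF a(2)])
    apply (rule disjI2)
    using c False E by simp
qed

lemma eqs_vals: "caba_framework F \<Longrightarrow> gr_assign \<sigma> \<Longrightarrow> \<forall>c\<in>eqs F Xs ts. sat F \<sigma> c \<Longrightarrow>
   i < length Xs \<Longrightarrow> length Xs = length ts \<Longrightarrow> \<sigma> (Xs!i) = tsubst \<sigma> (ts!i)"
  using eqs_mem[of i Xs ts F] eq_sat[of F \<sigma> "Xs!i" "ts!i"] by blast

lemma ground_claim: "ground_arg (cinst \<alpha> \<theta> D) \<Longrightarrow> t \<in> set (snd (claim \<alpha>)) \<Longrightarrow> tvars (tsubst \<theta> t) = {}"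
  by (auto simp: ground_arg_def cinst_def aground_def avars_def asubst_def)

lemma ground_asm: "ground_arg (cinst \<beta> \<theta> D) \<Longrightarrow> a \<in> asms \<beta> \<Longrightarrow> t \<in> set (snd a) \<Longrightarrow> tvars (tsubst \<theta> t) = {}"
  by (auto simp: ground_arg_def cinst_def aground_def avars_def asubst_def)

lemma fwd:
  assumes fw: "caba_framework F" and fa: "finite (cons \<alpha>)" "cons \<alpha> \<subseteq> catoms F"
    and fb: "finite (cons \<beta>)" "cons \<beta> \<subseteq> catoms F"
    and P: "pattacks F \<alpha> \<beta>"
  shows "\<exists>\<alpha>'\<in>GrCInst F \<alpha>. \<exists>\<beta>'\<in>GrCInst F \<beta>. pattacks F \<alpha>' \<beta>'"
proof -
  obtain a where a: "a \<in> asms \<beta>" "fst a \<in> apreds F" and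
    D: "(claim \<alpha> = contr F a \<and> pcond F (avars (claim \<alpha>)) (cons \<alpha>) (cons \<beta>))
    \<or> (fst (claim \<alpha>) = contrp F (fst a) \<and> snd (claim \<alpha>) \<noteq> snd a \<and>
       (\<exists>Xs. distinct Xs \<and> length Xs = length (snd a) \<and> length Xs = length (snd (claim \<alpha>)) \<and>
          set Xs \<inter> (arg_vars \<alpha> \<union> arg_vars \<beta>) = {} \<and>
          pcond F (set Xs) (cons \<alpha> \<union> eqs F Xs (snd (claim \<alpha>)))
                           (cons \<beta> \<union> eqs F Xs (snd a))))"
    using P unfolding pattacks_def by (elim bexE conjE) (rule that; assumption)
  have main: "\<exists>\<alpha>'\<in>GrCInst F \<alpha>. \<exists>\<beta>'\<in>GrCInst F \<beta>. pattacks F \<alpha>' \<beta>'"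
    if g1: "gr_assign \<sigma>1" and g2: "gr_assign \<sigma>2" and c: "fst (claim \<alpha>) = contrp F (fst a)"
    and m: "map (tsubst \<sigma>1) (snd (claim \<alpha>)) = map (tsubst \<sigma>2) (snd a)"
    and s1: "\<forall>c\<in>cons \<alpha>. sat F \<sigma>1 c" and s2: "\<forall>c\<in>cons \<beta>. sat F \<sigma>2 c" for \<sigma>1 \<sigma>2
    using ground_pattack[OF g1 g2 a c m s1 s2] inst_GrC[OF g1 s1 fa] inst_GrC[OF g2 s2 fb] by blast
  from D show ?thesis
  proof
    assume "claim \<alpha> = contr F a \<and> pcond F (avars (claim \<alpha>)) (cons \<alpha>) (cons \<beta>)"
    then have cl: "claim \<alpha> = contr F a" and pc: "pcond F (avars (claim \<alpha>)) (cons \<alpha>) (cons \<beta>)" by auto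
    from pc obtain \<sigma> \<sigma>1 \<sigma>2 where g1: "gr_assign \<sigma>1" and g2: "gr_assign \<sigma>2"
      and e1: "\<forall>x\<in>avars (claim \<alpha>). \<sigma>1 x = \<sigma> x" and s1: "\<forall>c\<in>cons \<alpha>. sat F \<sigma>1 c"
      and e2: "\<forall>x\<in>avars (claim \<alpha>). \<sigma>2 x = \<sigma> x" and s2: "\<forall>c\<in>cons \<beta>. sat F \<sigma>2 c"
      unfolding pcond_def by blast
    have sn: "snd (claim \<alpha>) = snd a" and c: "fst (claim \<alpha>) = contrp F (fst a)"
      using cl by (auto simp: contr_def)
    have "tsubst \<sigma>1 t = tsubst \<sigma>2 t" if "t \<in> set (snd (claim \<alpha>))" for t
    proof (rule tsubst_agree, rule ballI)
      fix x assume "x \<in> tvars t"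
      then have "x \<in> avars (claim \<alpha>)" using that by (auto simp: avars_def)
      then show "\<sigma>1 x = \<sigma>2 x" using e1 e2 by simp
    qed
    then have m: "map (tsubst \<sigma>1) (snd (claim \<alpha>)) = map (tsubst \<sigma>2) (snd a)"
      using sn by (simp add: map_eq_conv)
    show ?thesis using main[OF g1 g2 c m s1 s2] .
  next
    assume H: "fst (claim \<alpha>) = contrp F (fst a) \<and> snd (claim \<alpha>) \<noteq> snd a \<and>
       (\<exists>Xs. distinct Xs \<and> length Xs = length (snd a) \<and> length Xs = length (snd (claim \<alpha>)) \<and>
          set Xs \<inter> (arg_vars \<alpha> \<union> arg_vars \<beta>) = {} \<and>
          pcond F (set Xs) (cons \<alpha> \<union> eqs F Xs (snd (claim \<alpha>)))
                           (cons \<beta> \<union> eqs F Xs (snd a)))"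
    then have c: "fst (claim \<alpha>) = contrp F (fst a)" by blast
    from H obtain Xs where l1: "length Xs = length (snd a)" and l2: "length Xs = length (snd (claim \<alpha>))"
      and pc: "pcond F (set Xs) (cons \<alpha> \<union> eqs F Xs (snd (claim \<alpha>))) (cons \<beta> \<union> eqs F Xs (snd a))"
      by blast
    from pc obtain \<sigma> \<sigma>1 \<sigma>2 where g1: "gr_assign \<sigma>1" and g2: "gr_assign \<sigma>2"
      and e1: "\<forall>x\<in>set Xs. \<sigma>1 x = \<sigma> x" and s1: "\<forall>c\<in>cons \<alpha> \<union> eqs F Xs (snd (claim \<alpha>)). sat F \<sigma>1 c"
      and e2: "\<forall>x\<in>set Xs. \<sigma>2 x = \<sigma> x" and s2: "\<forall>c\<in>cons \<beta> \<union> eqs F Xs (snd a). sat F \<sigma>2 c"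
      unfolding pcond_def by blast
    have m: "map (tsubst \<sigma>1) (snd (claim \<alpha>)) = map (tsubst \<sigma>2) (snd a)"
    proof (rule nth_equalityI)
      show "length (map (tsubst \<sigma>1) (snd (claim \<alpha>))) = length (map (tsubst \<sigma>2) (snd a))"
        using l1 l2 by simp
    next
      fix i assume "i < length (map (tsubst \<sigma>1) (snd (claim \<alpha>)))"
      then have i: "i < length Xs" using l2 by simp
      have "\<sigma>1 (Xs!i) = tsubst \<sigma>1 (snd (claim \<alpha>) ! i)"
        using eqs_vals[OF fw g1 _ i l2] s1 by blast
      moreover have "\<sigma>2 (Xs!i) = tsubst \<sigma>2 (snd a ! i)"
        using eqs_vals[OF fw g2 _ i l1] s2 by blast
      moreover have "\<sigma>1 (Xs!i) = \<sigma>2 (Xs!i)" using e1 e2 i by simp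
      ultimately show "map (tsubst \<sigma>1) (snd (claim \<alpha>)) ! i = map (tsubst \<sigma>2) (snd a) ! i"
        using i l1 l2 by simp
    qed
    show ?thesis using main[OF g1 g2 c m] s1 s2 by blast
  qed
qed

lemma bwd:
  assumes fw: "caba_framework F" and fin: "finite (arg_vars \<alpha> \<union> arg_vars \<beta>)"
    and H: "\<exists>\<alpha>'\<in>GrCInst F \<alpha>. \<exists>\<beta>'\<in>GrCInst F \<beta>. pattacks F \<alpha>' \<beta>'"
  shows "pattacks F \<alpha> \<beta>"
proof -
  obtain \<theta>1 D1 \<theta>2 D2 where P: "pattacks F (cinst \<alpha> \<theta>1 D1) (cinst \<beta> \<theta>2 D2)"
    and c1: "consistent F (asubst \<theta>1 ` cons \<alpha> \<union> D1)" and gr1: "ground_arg (cinst \<alpha> \<theta>1 D1)"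
    and c2: "consistent F (asubst \<theta>2 ` cons \<beta> \<union> D2)" and gr2: "ground_arg (cinst \<beta> \<theta>2 D2)"
    using H unfolding GrCInst_def by blast
  obtain \<sigma>a where ga: "gr_assign \<sigma>a" and sa: "\<forall>c\<in>asubst \<theta>1 ` cons \<alpha> \<union> D1. sat F \<sigma>a c"
    using c1 unfolding consistent_def by blast
  obtain \<sigma>b where gb: "gr_assign \<sigma>b" and sb: "\<forall>c\<in>asubst \<theta>2 ` cons \<beta> \<union> D2. sat F \<sigma>b c"
    using c2 unfolding consistent_def by blast
  define \<rho>1 where "\<rho>1 = (\<lambda>x. tsubst \<sigma>a (\<theta>1 x))"
  define \<rho>2 where "\<rho>2 = (\<lambda>x. tsubst \<sigma>b (\<theta>2 x))"
  have g1: "gr_assign \<rho>1" unfolding \<rho>1_def using gr_comp[OF ga] .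
  have g2: "gr_assign \<rho>2" unfolding \<rho>2_def using gr_comp[OF gb] .
  have s1: "\<forall>c\<in>cons \<alpha>. sat F \<rho>1 c" using sa sat_asubst unfolding \<rho>1_def by blast
  have s2: "\<forall>c\<in>cons \<beta>. sat F \<rho>2 c" using sb sat_asubst unfolding \<rho>2_def by blast
  obtain a' where a': "a' \<in> asms (cinst \<beta> \<theta>2 D2)" "fst a' \<in> apreds F" and
    D: "(claim (cinst \<alpha> \<theta>1 D1) = contr F a' \<and> pcond F (avars (claim (cinst \<alpha> \<theta>1 D1))) (cons (cinst \<alpha> \<theta>1 D1)) (cons (cinst \<beta> \<theta>2 D2)))
    \<or> (fst (claim (cinst \<alpha> \<theta>1 D1)) = contrp F (fst a') \<and> snd (claim (cinst \<alpha> \<theta>1 D1)) \<noteq> snd a' \<and>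
       (\<exists>Xs. distinct Xs \<and> length Xs = length (snd a') \<and> length Xs = length (snd (claim (cinst \<alpha> \<theta>1 D1))) \<and>
          set Xs \<inter> (arg_vars (cinst \<alpha> \<theta>1 D1) \<union> arg_vars (cinst \<beta> \<theta>2 D2)) = {} \<and>
          pcond F (set Xs) (cons (cinst \<alpha> \<theta>1 D1) \<union> eqs F Xs (snd (claim (cinst \<alpha> \<theta>1 D1))))
                           (cons (cinst \<beta> \<theta>2 D2) \<union> eqs F Xs (snd a'))))"
    using P unfolding pattacks_def by (elim bexE conjE) (rule that; assumption)
  obtain a where a: "a \<in> asms \<beta>" and a'eq: "a' = asubst \<theta>2 a" using a'(1) by (auto simp: cinst_def)
  have ap: "fst a \<in> apreds F" using a'(2) a'eq by (simp add: asubst_def)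
  have cgr: "tvars t = {}" if "t \<in> set (snd (claim (cinst \<alpha> \<theta>1 D1)))" for t
    using that ground_claim[OF gr1] by (auto simp: cinst_def asubst_def)
  have agr: "tvars t = {}" if "t \<in> set (snd a')" for t
    using that ground_asm[OF gr2 a] a'eq by (auto simp: asubst_def)
  have K: "claim (cinst \<alpha> \<theta>1 D1) = contr F a'"
    using D
  proof
    assume "claim (cinst \<alpha> \<theta>1 D1) = contr F a' \<and> pcond F (avars (claim (cinst \<alpha> \<theta>1 D1))) (cons (cinst \<alpha> \<theta>1 D1)) (cons (cinst \<beta> \<theta>2 D2))" then show ?thesis by (rule conjunct1)
  next
    assume H2: "fst (claim (cinst \<alpha> \<theta>1 D1)) = contrp F (fst a') \<and> snd (claim (cinst \<alpha> \<theta>1 D1)) \<noteq> snd a' \<and>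
       (\<exists>Xs. distinct Xs \<and> length Xs = length (snd a') \<and> length Xs = length (snd (claim (cinst \<alpha> \<theta>1 D1))) \<and>
          set Xs \<inter> (arg_vars (cinst \<alpha> \<theta>1 D1) \<union> arg_vars (cinst \<beta> \<theta>2 D2)) = {} \<and>
          pcond F (set Xs) (cons (cinst \<alpha> \<theta>1 D1) \<union> eqs F Xs (snd (claim (cinst \<alpha> \<theta>1 D1))))
                           (cons (cinst \<beta> \<theta>2 D2) \<union> eqs F Xs (snd a')))"
    then have ne: "snd (claim (cinst \<alpha> \<theta>1 D1)) \<noteq> snd a'" by blast
    from H2 obtain Xs where l1: "length Xs = length (snd a')"
      and l2: "length Xs = length (snd (claim (cinst \<alpha> \<theta>1 D1)))"
      and pc: "pcond F (set Xs) (cons (cinst \<alpha> \<theta>1 D1) \<union> eqs F Xs (snd (claim (cinst \<alpha> \<theta>1 D1))))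
                           (cons (cinst \<beta> \<theta>2 D2) \<union> eqs F Xs (snd a'))"
      by blast
    from pc obtain \<sigma> \<sigma>1 \<sigma>2 where h1: "gr_assign \<sigma>1" and h2: "gr_assign \<sigma>2"
      and e1: "\<forall>x\<in>set Xs. \<sigma>1 x = \<sigma> x"
      and t1: "\<forall>c\<in>cons (cinst \<alpha> \<theta>1 D1) \<union> eqs F Xs (snd (claim (cinst \<alpha> \<theta>1 D1))). sat F \<sigma>1 c"
      and e2: "\<forall>x\<in>set Xs. \<sigma>2 x = \<sigma> x"
      and t2: "\<forall>c\<in>cons (cinst \<beta> \<theta>2 D2) \<union> eqs F Xs (snd a'). sat F \<sigma>2 c"
      unfolding pcond_def by blast
    have "snd (claim (cinst \<alpha> \<theta>1 D1)) = snd a'"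
    proof (rule nth_equalityI)
      show "length (snd (claim (cinst \<alpha> \<theta>1 D1))) = length (snd a')" using l1 l2 by simp
    next
      fix i assume "i < length (snd (claim (cinst \<alpha> \<theta>1 D1)))"
      then have i: "i < length Xs" using l2 by simp
      have "\<sigma>1 (Xs!i) = tsubst \<sigma>1 (snd (claim (cinst \<alpha> \<theta>1 D1)) ! i)"
        using eqs_vals[OF fw h1 _ i l2] t1 by blast
      also have "\<dots> = snd (claim (cinst \<alpha> \<theta>1 D1)) ! i"
        using cgr[of "snd (claim (cinst \<alpha> \<theta>1 D1)) ! i"] i l2 tsubst_ground_id by simp
      finally have x1: "\<sigma>1 (Xs!i) = snd (claim (cinst \<alpha> \<theta>1 D1)) ! i" .
      have "\<sigma>2 (Xs!i) = tsubst \<sigma>2 (snd a' ! i)"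
        using eqs_vals[OF fw h2 _ i l1] t2 by blast
      also have "\<dots> = snd a' ! i"
        using agr[of "snd a' ! i"] i l1 tsubst_ground_id by simp
      finally have x2: "\<sigma>2 (Xs!i) = snd a' ! i" .
      show "snd (claim (cinst \<alpha> \<theta>1 D1)) ! i = snd a' ! i" using x1 x2 e1 e2 i by simp
    qed
    with ne show ?thesis by blast
  qed
  have c: "fst (claim \<alpha>) = contrp F (fst a)"
    using K a'eq by (simp add: cinst_def asubst_def contr_def)
  have mth: "map (tsubst \<theta>1) (snd (claim \<alpha>)) = map (tsubst \<theta>2) (snd a)"
    using K a'eq by (simp add: cinst_def asubst_def contr_def)
  have r1: "tsubst \<rho>1 t = tsubst \<theta>1 t" if "t \<in> set (snd (claim \<alpha>))" for t
  proof -
    have "tsubst \<rho>1 t = tsubst \<sigma>a (tsubst \<theta>1 t)" by (simp add: \<rho>1_def tsubst_comp)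
    also have "\<dots> = tsubst \<theta>1 t" by (rule tsubst_ground_id[OF ground_claim[OF gr1 that]])
    finally show ?thesis .
  qed
  have r2: "tsubst \<rho>2 t = tsubst \<theta>2 t" if "t \<in> set (snd a)" for t
  proof -
    have "tsubst \<rho>2 t = tsubst \<sigma>b (tsubst \<theta>2 t)" by (simp add: \<rho>2_def tsubst_comp)
    also have "\<dots> = tsubst \<theta>2 t" by (rule tsubst_ground_id[OF ground_asm[OF gr2 a that]])
    finally show ?thesis .
  qed
  have m1: "map (tsubst \<rho>1) (snd (claim \<alpha>)) = map (tsubst \<theta>1) (snd (claim \<alpha>))"
    by (rule map_cong[OF refl r1])
  have m2: "map (tsubst \<rho>2) (snd a) = map (tsubst \<theta>2) (snd a)"
    by (rule map_cong[OF refl r2])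
  have m: "map (tsubst \<rho>1) (snd (claim \<alpha>)) = map (tsubst \<rho>2) (snd a)"
    using mth m1 m2 by simp
  show ?thesis using lift_pattack[OF fw fin g1 g2 a ap c m s1 s2] .
qed

theorem lemmaB2:
  fixes F :: "('p,'f,'v) caba" and \<alpha> \<beta> :: "('p,'f,'v) carg"
  assumes "caba_framework F"
    and "\<alpha> \<in> CArg F" and "\<beta> \<in> CArg F"
  shows "pattacks F \<alpha> \<beta> \<longleftrightarrow>
           (\<exists>\<alpha>'\<in>GrCInst F \<alpha>. \<exists>\<beta>'\<in>GrCInst F \<beta>. pattacks F \<alpha>' \<beta>')"
proof
  assume "pattacks F \<alpha> \<beta>"
  then show "\<exists>\<alpha>'\<in>GrCInst F \<alpha>. \<exists>\<beta>'\<in>GrCInst F \<beta>. pattacks F \<alpha>' \<beta>'"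
    using fwd[OF assms(1)] CArg_fin[OF assms(2)] CArg_fin[OF assms(3)] by blast
next
  assume "\<exists>\<alpha>'\<in>GrCInst F \<alpha>. \<exists>\<beta>'\<in>GrCInst F \<beta>. pattacks F \<alpha>' \<beta>'"
  then show "pattacks F \<alpha> \<beta>"
    using bwd[OF assms(1)] CArg_fin[OF assms(2)] CArg_fin[OF assms(3)] finite_arg_vars by blast
qed

end
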